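(* For any MeanEstimation algorithm (possibly using shared randomness) in which any machine receives at most $b$ bits in expectation, there is a valid input for which $\mathbb{E}[\|\mathbf{EST}-\boldsymbol\mu\|^2]=\Omega\!\left(y^2\,2^{-3b/d}\right)$.
   Context: MeanEstimation: there are $n$ machines; machine $v$ receives $\mathbf{x}_v\in\mathbb{R}^d$, and all receive a common $y$ with $\|\mathbf{x}_u-\mathbf{x}_v\|\le y$ for all $u,v$. All machines must output the same $\mathbf{EST}\in\mathbb{R}^d$ with $\mathbb{E}[\mathbf{EST}]=\boldsymbol\mu=\frac1n\sum_v\mathbf{x}_v$. $\|\cdot\|$ is a fixed one of the $\ell_1,\ell_2,\ell_\infty$ norms. Algorithms may use a common random string available to all machines. Bits received by a machine count all bits it receives from any source during the algorithm. The hidden constant is absolute. *)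

theory Defs
  imports "HOL-Probability.Probability"
begin

text \<open>Vectors of R^d are represented as functions nat => real that vanish
  outside the index set {..<d}; machines are 0,...,n-1.\<close>

datatype norm_kind = L1 | L2 | Linf

definition vnorm :: "norm_kind \<Rightarrow> nat \<Rightarrow> (nat \<Rightarrow> real) \<Rightarrow> real" where
  "vnorm k d z = (case k of
      L1 \<Rightarrow> (\<Sum>i<d. \<bar>z i\<bar>)
    | L2 \<Rightarrow> sqrt (\<Sum>i<d. (z i)^2)
    | Linf \<Rightarrow> Max (insert 0 ((\<lambda>i. \<bar>z i\<bar>) ` {..<d})))"

definition is_vec :: "nat \<Rightarrow> (nat \<Rightarrow> real) \<Rightarrow> bool" where
  "is_vec d z \<longleftrightarrow> (\<forall>i\<ge>d. z i = 0)"

definition valid_input :: "nat \<Rightarrow> nat \<Rightarrow> norm_kind \<Rightarrow> real \<Rightarrow> (nat \<Rightarrow> nat \<Rightarrow> real) \<Rightarrow> bool" where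
  "valid_input n d k y x \<longleftrightarrow>
     (\<forall>v\<ge>n. x v = (\<lambda>_. 0)) \<and> (\<forall>v<n. is_vec d (x v)) \<and>
     (\<forall>u<n. \<forall>v<n. vnorm k d (x u - x v) \<le> y)"

definition mean :: "nat \<Rightarrow> (nat \<Rightarrow> nat \<Rightarrow> real) \<Rightarrow> nat \<Rightarrow> real" where
  "mean n x = (\<lambda>i. (\<Sum>v<n. x v i) / real n)"

definition random_string :: "(nat \<Rightarrow> bool) measure" where
  "random_string = PiM UNIV (\<lambda>_. measure_pmf (bernoulli_pmf (1/2)))"

text \<open>An algorithm is abstracted by, for each machine v,
  rcv v x r : the bit string received by machine v (all bits it receives, from any
              source) on input x with random string r, and
  out v xv r s : machine v's output, a function of its own input xv, the random string r
              and the received bits s.\<close>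
definition EST ::
  "(nat \<Rightarrow> (nat \<Rightarrow> real) \<Rightarrow> (nat \<Rightarrow> bool) \<Rightarrow> bool list \<Rightarrow> nat \<Rightarrow> real) \<Rightarrow>
   (nat \<Rightarrow> (nat \<Rightarrow> nat \<Rightarrow> real) \<Rightarrow> (nat \<Rightarrow> bool) \<Rightarrow> bool list) \<Rightarrow>
   (nat \<Rightarrow> nat \<Rightarrow> real) \<Rightarrow> (nat \<Rightarrow> bool) \<Rightarrow> nat \<Rightarrow> real" where
  "EST out rcv x r = out 0 (x 0) r (rcv 0 x r)"

definition mean_estimation_alg ::
  "nat \<Rightarrow> nat \<Rightarrow> norm_kind \<Rightarrow> real \<Rightarrow>
   (nat \<Rightarrow> (nat \<Rightarrow> nat \<Rightarrow> real) \<Rightarrow> (nat \<Rightarrow> bool) \<Rightarrow> bool list) \<Rightarrow>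
   (nat \<Rightarrow> (nat \<Rightarrow> real) \<Rightarrow> (nat \<Rightarrow> bool) \<Rightarrow> bool list \<Rightarrow> nat \<Rightarrow> real) \<Rightarrow> bool" where
  "mean_estimation_alg n d k y rcv out \<longleftrightarrow>
     (\<forall>x. valid_input n d k y x \<longrightarrow>
        (\<forall>v<n. rcv v x \<in> random_string \<rightarrow>\<^sub>M count_space UNIV) \<and>
        (\<forall>r\<in>space random_string. \<forall>v<n. out v (x v) r (rcv v x r) = EST out rcv x r) \<and>
        (\<forall>i<d. integrable random_string (\<lambda>r. EST out rcv x r i) \<and>
               (\<integral>r. EST out rcv x r i \<partial>random_string) = mean n x i))"

definition receives_at_most ::
  "nat \<Rightarrow> nat \<Rightarrow> norm_kind \<Rightarrow> real \<Rightarrow>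
   (nat \<Rightarrow> (nat \<Rightarrow> nat \<Rightarrow> real) \<Rightarrow> (nat \<Rightarrow> bool) \<Rightarrow> bool list) \<Rightarrow> real \<Rightarrow> bool" where
  "receives_at_most n d k y rcv b \<longleftrightarrow>
     (\<forall>x. valid_input n d k y x \<longrightarrow>
        (\<forall>v<n. (\<integral>\<^sup>+ r. ennreal (real (length (rcv v x r))) \<partial>random_string) \<le> ennreal b))"

end

theory Submission
  imports Defs
begin


lemma prob_rs: "prob_space random_string"
  unfolding random_string_def
  by (intro prob_space_PiM) (simp add: prob_space_measure_pmf)

lemma vnorm_measurable:
  assumes "\<And>i. i < d \<Longrightarrow> (\<lambda>r. G r i) \<in> borel_measurable M"
  shows "(\<lambda>r. vnorm k d (G r)) \<in> borel_measurable M"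
proof (cases k)
  case L1 then show ?thesis unfolding vnorm_def using assms by simp
next
  case L2 then show ?thesis unfolding vnorm_def using assms by simp
next
  case Linf
  have eq: "\<And>r. insert 0 ((\<lambda>i. \<bar>G r i\<bar>) ` {..<d}) = (\<lambda>i. (if i < d then \<bar>G r i\<bar> else 0)) ` {..d}"
  proof -
    fix r
    have "{..d} = insert d {..<d}" by auto
    then show "insert 0 ((\<lambda>i. \<bar>G r i\<bar>) ` {..<d}) = (\<lambda>i. (if i < d then \<bar>G r i\<bar> else 0)) ` {..d}"
      by (auto simp: image_iff)
  qed
  have "(\<lambda>r. Max ((\<lambda>i. (if i < d then \<bar>G r i\<bar> else 0)) ` {..d})) \<in> borel_measurable M"
  proof (rule borel_measurable_Max)
    fix i assume "i \<in> {..d}"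
    show "(\<lambda>r. if i < d then \<bar>G r i\<bar> else 0) \<in> borel_measurable M"
      by (cases "i < d") (use assms in auto)
  qed simp
  then show ?thesis using Linf unfolding vnorm_def by (simp add: eq)
qed

lemma card_short_lists: "card {w::bool list. length w \<le> L} \<le> 2^(Suc L)"
proof -
  have "{w::bool list. length w \<le> L} = {w. set w \<subseteq> UNIV \<and> length w \<le> L}" by simp
  then have "card {w::bool list. length w \<le> L} = (\<Sum>i\<le>L. 2^i)"
    using card_lists_length_le[of "UNIV::bool set" L] by simp
  also have "(\<Sum>i\<le>L. (2::nat)^i) < 2^(Suc L)"
    by (induction L) auto
  finally show ?thesis by simp
qed

lemma finite_short_lists: "finite {w::bool list. length w \<le> L}"
proof -
  have "{w::bool list. length w \<le> L} = {w. set w \<subseteq> UNIV \<and> length w \<le> L}" by simp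
  then show ?thesis using finite_lists_length_le[of "UNIV::bool set" L] by simp
qed

lemma count_near:
  fixes P :: "nat \<Rightarrow> nat \<Rightarrow> bool"
  assumes uniq: "\<And>i p q. i < d \<Longrightarrow> P i p \<Longrightarrow> P i q \<Longrightarrow> p = q"
    and m: "1 \<le> m" and tau: "1 \<le> \<tau>"
  shows "card {a \<in> PiE {..<d} (\<lambda>_. {..<m}). card {i \<in> {..<d}. \<not> P i (a i)} < \<tau>} \<le> 2^d * m^(\<tau>-1)"
proof -
  define A where "A = PiE {..<d} (\<lambda>_. {..<m::nat})"
  define T where "T S = {a \<in> A. \<forall>i\<in>{..<d}-S. P i (a i)}" for S
  define \<I> where "\<I> = {S. S \<subseteq> {..<d} \<and> card S < \<tau>}"
  have fin: "finite \<I>" unfolding \<I>_def by auto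
  have sub: "{a \<in> A. card {i \<in> {..<d}. \<not> P i (a i)} < \<tau>} \<subseteq> (\<Union>S\<in>\<I>. T S)"
  proof
    fix a assume a: "a \<in> {a \<in> A. card {i \<in> {..<d}. \<not> P i (a i)} < \<tau>}"
    let ?S = "{i \<in> {..<d}. \<not> P i (a i)}"
    have "?S \<in> \<I>" using a unfolding \<I>_def by auto
    moreover have "a \<in> T ?S" using a unfolding T_def by auto
    ultimately show "a \<in> (\<Union>S\<in>\<I>. T S)" by blast
  qed
  have cT: "card (T S) \<le> m^(\<tau>-1)" if S: "S \<in> \<I>" for S
  proof -
    have inj: "inj_on (\<lambda>a. restrict a S) (T S)"
    proof (rule inj_onI)
      fix a b assume a: "a \<in> T S" and b: "b \<in> T S" and e: "restrict a S = restrict b S"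
      show "a = b"
      proof
        fix i
        show "a i = b i"
        proof (cases "i < d")
          case True
          show ?thesis
          proof (cases "i \<in> S")
            case True then show ?thesis using e by (metis restrict_apply')
          next
            case False
            then have "P i (a i)" "P i (b i)" using a b \<open>i<d\<close> unfolding T_def by auto
            then show ?thesis using uniq \<open>i<d\<close> by blast
          qed
        next
          case False
          then show ?thesis using a b unfolding T_def A_def by (auto simp: PiE_def extensional_def)
        qed
      qed
    qed
    have im: "(\<lambda>a. restrict a S) ` (T S) \<subseteq> PiE S (\<lambda>_. {..<m})"
      using S unfolding T_def A_def \<I>_def by (auto simp: PiE_def Pi_def)
    have fS: "finite S" using S unfolding \<I>_def by (auto intro: finite_subset)
    have "card (T S) \<le> card (PiE S (\<lambda>_. {..<m}))"
      by (rule card_inj_on_le[OF inj im]) (simp add: fS finite_PiE)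
    also have "\<dots> = m ^ card S" using fS by (simp add: card_PiE)
    also have "\<dots> \<le> m^(\<tau>-1)" using S m unfolding \<I>_def by (intro power_increasing) auto
    finally show ?thesis .
  qed
  have "card {a \<in> A. card {i \<in> {..<d}. \<not> P i (a i)} < \<tau>} \<le> card (\<Union>S\<in>\<I>. T S)"
    by (rule card_mono[OF _ sub]) (use fin in \<open>auto simp: T_def A_def finite_PiE\<close>)
  also have "\<dots> \<le> (\<Sum>S\<in>\<I>. card (T S))" by (rule card_UN_le[OF fin])
  also have "\<dots> \<le> (\<Sum>S\<in>\<I>. m^(\<tau>-1))" by (rule sum_mono) (rule cT)
  also have "\<dots> = card \<I> * m^(\<tau>-1)" by simp
  also have "card \<I> \<le> card (Pow {..<d})" unfolding \<I>_def by (rule card_mono) auto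
  then have "card \<I> * m^(\<tau>-1) \<le> 2^d * m^(\<tau>-1)" by (simp add: card_Pow)
  finally show ?thesis unfolding A_def .
qed



definition wk :: "norm_kind \<Rightarrow> nat \<Rightarrow> real" where
  "wk k d = (case k of L1 \<Rightarrow> real d | L2 \<Rightarrow> sqrt (real d) | Linf \<Rightarrow> 1)"

lemma wk_pos: "1 \<le> d \<Longrightarrow> 0 < wk k d"
  by (cases k) (auto simp: wk_def)

lemma err_lb:
  fixes f :: "nat \<Rightarrow> real" and a :: "nat \<Rightarrow> nat"
  assumes cn: "1/2 \<le> cn" and h: "h = y / (real m * wk k d)" and y: "0 < y" and m: "0 < m"
    and d: "1 \<le> d" and tau: "\<tau> = d div 5 + 1"
    and W: "\<tau> \<le> card {i \<in> {..<d}. \<not> \<bar>f i - cn*h*real (a i)\<bar> < cn*h/2}"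
  shows "y^2 / (400 * (real m)^2) \<le> (vnorm k d (\<lambda>i. f i - cn * (if i<d then h * real (a i) else 0)))^2"
proof -
  define W where "W = {i \<in> {..<d}. \<not> \<bar>f i - cn*h*real (a i)\<bar> < cn*h/2}"
  define e where "e = (\<lambda>i. f i - cn * (if i<d then h * real (a i) else 0))"
  define q where "q = cn*h/2"
  have wpos: "0 < wk k d" using wk_pos d by auto
  have hpos: "0 < h" using h y m wpos by auto
  have qh: "h/4 \<le> q" unfolding q_def using cn hpos by (simp add: field_simps)
  have q0: "0 \<le> q" using qh hpos by simp
  have eW: "q \<le> \<bar>e i\<bar>" if "i \<in> W" for i
    using that unfolding W_def e_def q_def by (auto simp: mult.assoc)
  have Wsub: "W \<subseteq> {..<d}" unfolding W_def by auto
  have cW: "\<tau> \<le> card W" using W unfolding W_def .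
  have tau_r: "real d / 5 \<le> real \<tau>" unfolding tau by linarith
  have m0: "0 < real m" using m by simp
  have "y^2 / (400 * (real m)^2) \<le> (vnorm k d e)^2"
  proof (cases k)
    case L1
    have hh: "h = y / (real m * real d)" using h L1 by (simp add: wk_def)
    have "real \<tau> * q \<le> real (card W) * q" using cW q0 by (intro mult_right_mono) auto
    also have "\<dots> = (\<Sum>i\<in>W. q)" by simp
    also have "\<dots> \<le> (\<Sum>i\<in>W. \<bar>e i\<bar>)" by (rule sum_mono) (rule eW)
    also have "\<dots> \<le> (\<Sum>i<d. \<bar>e i\<bar>)" by (rule sum_mono2) (use Wsub in auto)
    finally have s: "real \<tau> * q \<le> vnorm k d e" using L1 by (simp add: vnorm_def)
    have "y / (20 * real m) \<le> real \<tau> * q"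
    proof -
      have "y / (20 * real m) = (real d / 5) * (h/4)" using hh d m0 by (simp add: field_simps)
      also have "\<dots> \<le> real \<tau> * q" using tau_r qh hpos by (intro mult_mono) auto
      finally show ?thesis .
    qed
    then have "y / (20 * real m) \<le> vnorm k d e" using s by linarith
    moreover have "0 \<le> y / (20 * real m)" using y m0 by simp
    ultimately have "(y / (20 * real m))^2 \<le> (vnorm k d e)^2" by (rule power_mono)
    moreover have "(y / (20 * real m))^2 = y^2 / (400 * (real m)^2)" by (simp add: power_divide power_mult_distrib)
    ultimately show ?thesis by simp
  next
    case L2
    have hh: "h = y / (real m * sqrt (real d))" using h L2 by (simp add: wk_def)
    have h2: "h^2 = y^2 / ((real m)^2 * real d)" using hh d by (simp add: power_divide power_mult_distrib)
    have "real \<tau> * q^2 \<le> real (card W) * q^2" using cW by (intro mult_right_mono) auto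
    also have "\<dots> = (\<Sum>i\<in>W. q^2)" by simp
    also have "\<dots> \<le> (\<Sum>i\<in>W. (e i)^2)" 
      by (rule sum_mono) (metis eW q0 abs_ge_zero power_mono power2_abs)
    also have "\<dots> \<le> (\<Sum>i<d. (e i)^2)" by (rule sum_mono2) (use Wsub in auto)
    finally have s: "real \<tau> * q^2 \<le> (vnorm k d e)^2" using L2 by (simp add: vnorm_def sum_nonneg)
    have "y^2 / (400 * (real m)^2) \<le> (real d / 5) * (h/4)^2"
      using h2 d m0 by (simp add: field_simps power_divide)
    also have "\<dots> \<le> real \<tau> * q^2" using tau_r qh hpos
      by (intro mult_mono power_mono) auto
    finally show ?thesis using s by linarith
  next
    case Linf
    have hh: "h = y / real m" using h Linf by (simp add: wk_def)
    have "W \<noteq> {}" using cW tau by auto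
    then obtain i0 where i0: "i0 \<in> W" by auto
    have "q \<le> \<bar>e i0\<bar>" by (rule eW[OF i0])
    also have "\<bar>e i0\<bar> \<le> Max (insert 0 ((\<lambda>i. \<bar>e i\<bar>) ` {..<d}))"
      using i0 Wsub by (intro Max_ge) auto
    finally have s: "h/4 \<le> vnorm k d e" using Linf qh by (simp add: vnorm_def)
    have "(h/4)^2 = y^2 / (16 * (real m)^2)" using hh m0 by (simp add: power_divide power_mult_distrib)
    moreover have "y^2 / (400 * (real m)^2) \<le> y^2 / (16 * (real m)^2)" using m0
      by (intro divide_left_mono) auto
    ultimately have "y^2 / (400 * (real m)^2) \<le> (h/4)^2" by simp
    also have "\<dots> \<le> (vnorm k d e)^2" using s hpos by (intro power_mono) auto
    finally show ?thesis .
  qed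
  then show ?thesis unfolding e_def .
qed



lemma pointwise:
  fixes s :: "(nat\<Rightarrow>nat) \<Rightarrow> bool list" and P :: "bool list \<Rightarrow> nat \<Rightarrow> nat \<Rightarrow> bool"
  assumes uniq: "\<And>w i p q. i<d \<Longrightarrow> P w i p \<Longrightarrow> P w i q \<Longrightarrow> p = q" and m: "1\<le>m" and tau: "1\<le>\<tau>"
    and A: "A = PiE {..<d} (\<lambda>_. {..<m})"
  shows "card A \<le> card {a\<in>A. \<tau> \<le> card {i\<in>{..<d}. \<not> P (s a) i (a i)}} + card {a\<in>A. L < length (s a)}
           + 2^(Suc L) * (2^d * m^(\<tau>-1))"
proof -
  define Wl where "Wl = {w::bool list. length w \<le> L}"
  define B where "B w = {a\<in>A. card {i\<in>{..<d}. \<not> P w i (a i)} < \<tau>}" for w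
  define G where "G = {a\<in>A. length (s a) \<le> L \<and> card {i\<in>{..<d}. \<not> P (s a) i (a i)} < \<tau>}"
  have finA: "finite A" unfolding A by (simp add: finite_PiE)
  have fW: "finite Wl" unfolding Wl_def by (rule finite_short_lists)
  have "A \<subseteq> {a\<in>A. \<tau> \<le> card {i\<in>{..<d}. \<not> P (s a) i (a i)}} \<union> {a\<in>A. L < length (s a)} \<union> G"
    unfolding G_def by auto
  then have "card A \<le> card ({a\<in>A. \<tau> \<le> card {i\<in>{..<d}. \<not> P (s a) i (a i)}} \<union> {a\<in>A. L < length (s a)} \<union> G)"
    by (intro card_mono) (use finA in \<open>auto simp: G_def\<close>)
  also have "\<dots> \<le> card {a\<in>A. \<tau> \<le> card {i\<in>{..<d}. \<not> P (s a) i (a i)}} + card {a\<in>A. L < length (s a)} + card G"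
    by (meson add_mono card_Un_le le_refl order_trans)
  also have "card G \<le> 2^(Suc L) * (2^d * m^(\<tau>-1))"
  proof -
    have "G \<subseteq> (\<Union>w\<in>Wl. B w)" unfolding G_def B_def Wl_def by auto
    then have "card G \<le> card (\<Union>w\<in>Wl. B w)"
      by (intro card_mono) (use fW finA in \<open>auto simp: B_def\<close>)
    also have "\<dots> \<le> (\<Sum>w\<in>Wl. card (B w))" by (rule card_UN_le[OF fW])
    also have "\<dots> \<le> (\<Sum>w\<in>Wl. 2^d * m^(\<tau>-1))"
    proof (rule sum_mono)
      fix w
      show "card (B w) \<le> 2^d * m^(\<tau>-1)"
        unfolding B_def A by (rule count_near) (use uniq m tau in auto)
    qed
    also have "\<dots> = card Wl * (2^d * m^(\<tau>-1))" by simp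
    also have "\<dots> \<le> 2^(Suc L) * (2^d * m^(\<tau>-1))"
      unfolding Wl_def by (intro mult_right_mono card_short_lists) auto
    finally show ?thesis .
  qed
  finally show ?thesis by simp
qed

lemma card_filter_sum: "finite A \<Longrightarrow> real (card {a\<in>A. Q a}) = (\<Sum>a\<in>A. if Q a then 1 else 0)"
  by (simp add: sum.inter_filter[symmetric])

lemma vnorm_neg: "vnorm k d (- z) = vnorm k d z"
  by (cases k) (simp_all add: vnorm_def)

lemma vnorm_zero: "vnorm k d (\<lambda>_. 0) = 0"
proof (cases k)
  case Linf
  have "insert 0 ((\<lambda>i. \<bar>(\<lambda>_. 0::real) i\<bar>) ` {..<d}) = {0}" by auto
  then show ?thesis using Linf unfolding vnorm_def by (auto intro!: Max_eqI)
qed (simp_all add: vnorm_def)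

lemma vnorm_grid:
  assumes h: "h = y / (real m * wk k d)" and y: "0 < y" and m: "0 < m" and d: "1 \<le> d"
    and a: "a \<in> PiE {..<d} (\<lambda>_. {..<m})"
  shows "vnorm k d (\<lambda>i. if i<d then h * real (a i) else 0) \<le> y"
proof -
  have wpos: "0 < wk k d" using wk_pos d by auto
  have hpos: "0 < h" using h y m wpos by auto
  have ai: "0 \<le> h * real (a i) \<and> h * real (a i) \<le> h * real m" if "i < d" for i
    using a that hpos by (auto simp: PiE_def Pi_def less_imp_le)
  have m0: "0 < real m" using m by simp
  show ?thesis
  proof (cases k)
    case L1
    have "(\<Sum>i<d. \<bar>if i<d then h * real (a i) else 0\<bar>) \<le> (\<Sum>i<d. h * real m)"
      by (rule sum_mono) (use ai in auto)
    also have "\<dots> = y" using h L1 m0 d by (simp add: wk_def)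
    finally show ?thesis using L1 by (simp add: vnorm_def)
  next
    case L2
    have "(\<Sum>i<d. (if i<d then h * real (a i) else 0)^2) \<le> (\<Sum>i<d. (h * real m)^2)"
      by (rule sum_mono) (use ai in \<open>auto intro: power_mono\<close>)
    also have "\<dots> = y^2" using h L2 m0 d by (simp add: wk_def power_divide power_mult_distrib)
    finally have "sqrt (\<Sum>i<d. (if i<d then h * real (a i) else 0)^2) \<le> sqrt (y^2)" by (rule real_sqrt_le_mono)
    then show ?thesis using L2 y by (simp add: vnorm_def)
  next
    case Linf
    have "h * real m = y" using h Linf m0 by (simp add: wk_def)
    then show ?thesis using Linf y ai by (auto simp: vnorm_def)
  qed
qed

lemma sum_shift: "(\<Sum>v<n. if 0 < v \<and> v < n then c else 0) = real (n - 1) * (c::real)"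
proof -
  have "(\<Sum>v<n. if 0 < v \<and> v < n then c else 0) = (\<Sum>v<n. if 0 < v then c else 0)"
    by (rule sum.cong) auto
  also have "\<dots> = real (n - 1) * c"
  proof (induction n)
    case (Suc n)
    then show ?case by (cases n) (auto simp: algebra_simps)
  qed simp
  finally show ?thesis .
qed



lemma params:
  fixes b :: real and d :: nat
  assumes b: "0 \<le> b" and d: "1 \<le> d"
    and j: "j = nat \<lceil>8 + 3*b/(2*real d)\<rceil>" and L: "L = nat \<lfloor>6*b/5\<rfloor>" and tau: "\<tau> = d div 5 + 1"
  shows "12 * (2^(Suc L) * (2^d * (2^j)^(\<tau>-1))) \<le> ((2::nat)^j)^d"
    and "6*b < 5*(real L + 1)"
    and "(real ((2::nat)^j))^2 \<le> 2^18 * 2 powr (3*b/real d)"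
proof -
  have d0: "0 < real d" using d by simp
  have x0: "0 \<le> 3*b/(2*real d)" using b d0 by simp
  have jr: "8 + 3*b/(2*real d) \<le> real j" "real j < 9 + 3*b/(2*real d)"
    unfolding j using x0 by linarith+
  have Lr: "real L \<le> 6*b/5" "6*b/5 < real L + 1" unfolding L using b by linarith+
  show "6*b < 5*(real L + 1)" using Lr(2) by (simp add: field_simps)
  have dd: "real (d div 5) \<le> real d / 5" by linarith
  have key: "5 + L + d + j*(d div 5) \<le> j*d"
  proof -
    have "real j * real (d div 5) \<le> real j * (real d / 5)" using dd by (intro mult_left_mono) auto
    moreover have "(8 + 3*b/(2*real d)) * (4 * real d / 5) \<le> real j * (4 * real d / 5)"
      using jr d0 by (intro mult_right_mono) auto
    moreover have "(8 + 3*b/(2*real d)) * (4 * real d / 5) = 32 * real d / 5 + 6*b/5"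
      using d0 by (simp add: field_simps)
    moreover have "real j * (4 * real d / 5) + real j * (real d / 5) = real j * real d"
      by (simp add: field_simps)
    moreover have "1 \<le> real d" using d by simp
    ultimately have "real (5 + L + d + j*(d div 5)) \<le> real (j*d)"
      using Lr unfolding of_nat_add of_nat_mult by linarith
    then show ?thesis by linarith
  qed
  have "12 * (2^(Suc L) * (2^d * (2^j)^(\<tau>-1))) \<le> (2::nat)^4 * (2^(Suc L) * (2^d * (2^j)^(\<tau>-1)))"
    by simp
  also have "\<dots> = 2^(5 + L + d + j*(d div 5))"
  proof -
    have t: "\<tau> - 1 = d div 5" using tau by simp
    have "(2::nat)^(5 + L + d + j*(d div 5)) = 2^4 * (2 * 2^L) * 2^d * (2^j)^(d div 5)"
      unfolding power_add power_mult by simp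
    then show ?thesis unfolding t by simp
  qed
  also have "\<dots> \<le> 2^(j*d)" by (rule power_increasing[OF key]) simp
  also have "\<dots> = ((2::nat)^j)^d" by (simp add: power_mult)
  finally show "12 * (2^(Suc L) * (2^d * (2^j)^(\<tau>-1))) \<le> ((2::nat)^j)^d" .
  have "(real ((2::nat)^j))^2 = 2 powr (2 * real j)"
  proof -
    have "(real ((2::nat)^j))^2 = (2::real)^(j*2)" by (simp add: power_mult)
    also have "\<dots> = 2 powr (real (j*2))" by (rule powr_realpow[symmetric]) simp
    finally show ?thesis by (simp add: mult.commute)
  qed
  also have "\<dots> \<le> 2 powr (18 + 3*b/real d)"
    using jr d0 by (intro powr_mono) (auto simp: field_simps)
  also have "\<dots> = 2^18 * 2 powr (3*b/real d)" by (simp add: powr_add)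
  finally show "(real ((2::nat)^j))^2 \<le> 2^18 * 2 powr (3*b/real d)" .
qed



lemma main:
  fixes n d :: nat and k :: norm_kind and y b :: real and rcv out
  assumes n: "2 \<le> n" and d: "1 \<le> d" and y: "0 < y" and b: "0 \<le> b"
    and alg: "mean_estimation_alg n d k y rcv out" and rec: "receives_at_most n d k y rcv b"
  shows "\<exists>x. valid_input n d k y x \<and>
        (\<integral>\<^sup>+ r. ennreal ((vnorm k d (EST out rcv x r - mean n x))^2) \<partial>random_string)
          \<ge> ennreal (y^2 * 2 powr (- 3 * b / real d) / (4800 * 2^18))"
proof -
  define j where "j = nat \<lceil>8 + 3*b/(2*real d)\<rceil>"
  define L where "L = nat \<lfloor>6*b/5\<rfloor>"
  define \<tau> where "\<tau> = d div 5 + 1"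
  define m :: nat where "m = 2^j"
  define h where "h = y / (real m * wk k d)"
  define cn where "cn = real (n-1) / real n"
  define A where "A = PiE {..<d} (\<lambda>_. {..<m})"
  define z where "z a = (\<lambda>i. if i<d then h * real (a i) else 0)" for a :: "nat \<Rightarrow> nat"
  define X where "X a = (\<lambda>v. if 0 < v \<and> v < n then z a else (\<lambda>_. 0::real))" for a
  define E0 where "E0 = y^2 / (400 * (real m)^2)"
  define N where "N = 2^(Suc L) * (2^d * m^(\<tau>-1))"
  define F where "F r w = out 0 (\<lambda>_. 0::real) r w" for r w
  define s where "s a r = rcv 0 (X a) r" for a r
  define err where "err a r = (vnorm k d (EST out rcv (X a) r - mean n (X a)))^2" for a r
  define len where "len a r = real (length (s a r))" for a r
  note P = params[OF b d j_def L_def \<tau>_def]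
  have m0: "0 < m" unfolding m_def by simp
  have m1: "1 \<le> m" using m0 by simp
  have tau1: "1 \<le> \<tau>" unfolding \<tau>_def by simp
  have wpos: "0 < wk k d" using wk_pos d by auto
  have hpos: "0 < h" unfolding h_def using y m0 wpos by auto
  have cn: "1/2 \<le> cn" "cn \<le> 1" unfolding cn_def using n by (auto simp: field_simps of_nat_diff)
  have E0pos: "0 < E0" unfolding E0_def using y m0 by simp
  have finA: "finite A" unfolding A_def by (simp add: finite_PiE)
  have cardA: "card A = m^d" unfolding A_def by (simp add: card_PiE)
  have A0: "0 < card A" unfolding cardA using m0 by simp
  have N12: "12 * N \<le> card A" unfolding N_def cardA m_def using P(1) .
  have prob: "prob_space random_string" by (rule prob_rs)
  have diffs: "X a u - X a v = (\<lambda>_. 0) \<or> X a u - X a v = z a \<or> X a u - X a v = - z a" for a u v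
    unfolding X_def by (auto simp: fun_eq_iff)
  have valid: "valid_input n d k y (X a)" if a: "a \<in> A" for a
  proof -
    have zb: "vnorm k d (z a) \<le> y" unfolding z_def
      by (rule vnorm_grid[OF h_def y m0 d]) (use a A_def in simp)
    have "vnorm k d (X a u - X a v) \<le> y" for u v
      using diffs[of a u v] zb y by (auto simp: vnorm_neg vnorm_zero)
    moreover have "\<forall>v\<ge>n. X a v = (\<lambda>_. 0)" unfolding X_def by auto
    moreover have "\<forall>v<n. is_vec d (X a v)" unfolding X_def z_def is_vec_def by auto
    ultimately show ?thesis unfolding valid_input_def by blast
  qed
  have meanX: "mean n (X a) = (\<lambda>i. cn * z a i)" for a
  proof
    fix i
    have "(\<Sum>v<n. X a v i) = (\<Sum>v<n. if 0 < v \<and> v < n then z a i else 0)"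
      unfolding X_def by (rule sum.cong) auto
    also have "\<dots> = real (n-1) * z a i" by (rule sum_shift)
    finally show "mean n (X a) i = cn * z a i" unfolding mean_def cn_def by simp
  qed
  have ESTX: "EST out rcv (X a) r = F r (s a r)" for a r
    unfolding EST_def F_def s_def X_def by simp
  have err_eq: "err a r = (vnorm k d (\<lambda>i. F r (s a r) i - cn * (if i<d then h * real (a i) else 0)))^2" for a r
    unfolding err_def ESTX meanX by (simp add: fun_diff_def z_def)
  have pw: "real (card A) * E0 * (real L + 1) \<le> (\<Sum>a\<in>A. (real L + 1) * err a r + E0 * len a r) + real N * E0 * (real L + 1)" for r
  proof -
    define Pr where "Pr w i p = (\<bar>F r w i - cn*h*real p\<bar> < cn*h/2)" for w i and p :: nat
    have cnh: "0 < cn * h" using cn hpos by simp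
    have uniq: "p = q" if "Pr w i p" "Pr w i q" for w i p q
    proof -
      have "\<bar>cn*h*real p - cn*h*real q\<bar> < cn*h" using that unfolding Pr_def by linarith
      then have "cn*h*\<bar>real p - real q\<bar> < cn*h*1" using cnh cn(1) hpos by (simp add: abs_mult right_diff_distrib[symmetric])
      then have "\<bar>real p - real q\<bar> < 1" using cnh by (simp only: mult_less_cancel_left_pos)
      then show ?thesis by linarith
    qed
    define S1 where "S1 = {a\<in>A. \<tau> \<le> card {i\<in>{..<d}. \<not> Pr (s a r) i (a i)}}"
    define S2 where "S2 = {a\<in>A. L < length (s a r)}"
    have c: "card A \<le> card S1 + card S2 + N"
      unfolding S1_def S2_def N_def
      by (rule pointwise[OF _ m1 tau1 A_def]) (rule uniq)
    have i1: "(if a \<in> S1 then 1 else 0) * E0 \<le> err a r" if a: "a \<in> A" for a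
    proof (cases "a \<in> S1")
      case True
      then have "\<tau> \<le> card {i\<in>{..<d}. \<not> \<bar>F r (s a r) i - cn*h*real (a i)\<bar> < cn*h/2}"
        unfolding S1_def Pr_def by simp
      then have "E0 \<le> err a r" unfolding err_eq E0_def
        by (intro err_lb[OF cn(1) h_def y m0 d \<tau>_def])
      then show ?thesis using True by simp
    qed (simp add: err_def)
    have i2: "(if a \<in> S2 then 1 else 0) * (real L + 1) \<le> len a r" for a
      unfolding S2_def len_def by auto
    have "real (card A) \<le> (\<Sum>a\<in>A. if a \<in> S1 then 1 else 0) + (\<Sum>a\<in>A. if a \<in> S2 then 1 else 0) + real N"
    proof -
      have "real (card S1) = (\<Sum>a\<in>A. if a \<in> S1 then 1 else 0)"
        unfolding S1_def using card_filter_sum[OF finA] by simp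
      moreover have "real (card S2) = (\<Sum>a\<in>A. if a \<in> S2 then 1 else 0)"
        unfolding S2_def using card_filter_sum[OF finA] by simp
      ultimately show ?thesis using c by (metis of_nat_add of_nat_mono)
    qed
    then have "real (card A) * (E0 * (real L + 1)) \<le> ((\<Sum>a\<in>A. if a \<in> S1 then 1 else 0) + (\<Sum>a\<in>A. if a \<in> S2 then 1 else 0) + real N) * (E0 * (real L + 1))"
      using E0pos by (intro mult_right_mono) auto
    also have "\<dots> = (\<Sum>a\<in>A. (real L + 1) * ((if a \<in> S1 then 1 else 0) * E0) + E0 * ((if a \<in> S2 then 1 else 0) * (real L + 1))) + real N * E0 * (real L + 1)"
      by (simp add: sum.distrib sum_distrib_right sum_distrib_left algebra_simps)
    also have "\<dots> \<le> (\<Sum>a\<in>A. (real L + 1) * err a r + E0 * len a r) + real N * E0 * (real L + 1)"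
      using i1 i2 E0pos by (intro add_mono sum_mono mult_left_mono) auto
    finally show ?thesis by (simp add: mult.assoc)
  qed
  have merr: "(\<lambda>r. ennreal (err a r)) \<in> borel_measurable random_string" if a: "a \<in> A" for a
  proof -
    have v: "valid_input n d k y (X a)" by (rule valid[OF a])
    have int: "\<forall>i<d. integrable random_string (\<lambda>r. EST out rcv (X a) r i)"
      using alg v unfolding mean_estimation_alg_def by blast
    have "(\<lambda>r. vnorm k d (EST out rcv (X a) r - mean n (X a))) \<in> borel_measurable random_string"
    proof (rule vnorm_measurable)
      fix i assume "i < d"
      then have "(\<lambda>r. EST out rcv (X a) r i) \<in> borel_measurable random_string"
        using int by (auto intro: borel_measurable_integrable)
      then show "(\<lambda>r. (EST out rcv (X a) r - mean n (X a)) i) \<in> borel_measurable random_string"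
        by (simp add: fun_diff_def)
    qed
    then show ?thesis unfolding err_def by measurable
  qed
  have mlen: "(\<lambda>r. ennreal (len a r)) \<in> borel_measurable random_string" if a: "a \<in> A" for a
  proof -
    have v: "valid_input n d k y (X a)" by (rule valid[OF a])
    have mr: "rcv 0 (X a) \<in> random_string \<rightarrow>\<^sub>M count_space UNIV"
      using alg v n unfolding mean_estimation_alg_def by auto
    show ?thesis unfolding len_def s_def
      by (rule measurable_compose[OF mr]) simp
  qed
  have Jb: "(\<integral>\<^sup>+ r. ennreal (len a r) \<partial>random_string) \<le> ennreal b" if a: "a \<in> A" for a
    using rec valid[OF a] n unfolding receives_at_most_def len_def s_def by auto
  define I where "I a = (\<integral>\<^sup>+ r. ennreal (err a r) \<partial>random_string)" for a
  define J where "J a = (\<integral>\<^sup>+ r. ennreal (len a r) \<partial>random_string)" for a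
  have err0: "0 \<le> err a r" for a r unfolding err_def by simp
  have len0: "0 \<le> len a r" for a r unfolding len_def by simp
  have eqr: "ennreal ((\<Sum>a\<in>A. (real L + 1) * err a r + E0 * len a r) + real N * E0 * (real L + 1))
     = (\<Sum>a\<in>A. ennreal (real L + 1) * ennreal (err a r) + ennreal E0 * ennreal (len a r)) + ennreal (real N * E0 * (real L + 1))" for r
  proof -
    have t: "ennreal ((real L + 1) * err a r + E0 * len a r) = ennreal (real L + 1) * ennreal (err a r) + ennreal E0 * ennreal (len a r)" for a
      using err0[of a r] len0[of a r] E0pos by (simp add: ennreal_plus[symmetric] ennreal_mult)
    have nn: "0 \<le> (real L + 1) * err a r + E0 * len a r" for a
      using err0[of a r] len0[of a r] E0pos by simp
    have "ennreal (\<Sum>a\<in>A. (real L + 1) * err a r + E0 * len a r) = (\<Sum>a\<in>A. ennreal ((real L + 1) * err a r + E0 * len a r))"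
      using nn by (simp add: sum_nonneg)
    then show ?thesis using nn E0pos by (simp add: ennreal_plus[symmetric] sum_nonneg t)
  qed
  have main_ineq: "ennreal (real (card A) * E0 * (real L + 1)) \<le> (\<Sum>a\<in>A. ennreal (real L + 1) * I a + ennreal E0 * J a) + ennreal (real N * E0 * (real L + 1))"
  proof -
    have "ennreal (real (card A) * E0 * (real L + 1)) = (\<integral>\<^sup>+ r. ennreal (real (card A) * E0 * (real L + 1)) \<partial>random_string)"
      using prob_space.emeasure_space_1[OF prob] by simp
    also have "\<dots> \<le> (\<integral>\<^sup>+ r. (\<Sum>a\<in>A. ennreal (real L + 1) * ennreal (err a r) + ennreal E0 * ennreal (len a r)) + ennreal (real N * E0 * (real L + 1)) \<partial>random_string)"
    proof (rule nn_integral_mono)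
      fix r
      have "ennreal (real (card A) * E0 * (real L + 1)) \<le> ennreal ((\<Sum>a\<in>A. (real L + 1) * err a r + E0 * len a r) + real N * E0 * (real L + 1))"
        using pw[of r] by (rule ennreal_leI)
      then show "ennreal (real (card A) * E0 * (real L + 1)) \<le> (\<Sum>a\<in>A. ennreal (real L + 1) * ennreal (err a r) + ennreal E0 * ennreal (len a r)) + ennreal (real N * E0 * (real L + 1))"
        unfolding eqr .
    qed
    also have "\<dots> = (\<integral>\<^sup>+ r. (\<Sum>a\<in>A. ennreal (real L + 1) * ennreal (err a r) + ennreal E0 * ennreal (len a r)) \<partial>random_string) + (\<integral>\<^sup>+ r. ennreal (real N * E0 * (real L + 1)) \<partial>random_string)"
      by (rule nn_integral_add) (use merr mlen in auto)
    also have "(\<integral>\<^sup>+ r. ennreal (real N * E0 * (real L + 1)) \<partial>random_string) = ennreal (real N * E0 * (real L + 1))"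
      using prob_space.emeasure_space_1[OF prob] by simp
    also have "(\<integral>\<^sup>+ r. (\<Sum>a\<in>A. ennreal (real L + 1) * ennreal (err a r) + ennreal E0 * ennreal (len a r)) \<partial>random_string)
        = (\<Sum>a\<in>A. (\<integral>\<^sup>+ r. ennreal (real L + 1) * ennreal (err a r) + ennreal E0 * ennreal (len a r) \<partial>random_string))"
      by (rule nn_integral_sum) (use merr mlen in auto)
    also have "\<dots> = (\<Sum>a\<in>A. ennreal (real L + 1) * I a + ennreal E0 * J a)"
    proof (rule sum.cong[OF refl])
      fix a assume a: "a \<in> A"
      have "(\<integral>\<^sup>+ r. ennreal (real L + 1) * ennreal (err a r) + ennreal E0 * ennreal (len a r) \<partial>random_string)
         = (\<integral>\<^sup>+ r. ennreal (real L + 1) * ennreal (err a r) \<partial>random_string) + (\<integral>\<^sup>+ r. ennreal E0 * ennreal (len a r) \<partial>random_string)"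
        by (rule nn_integral_add) (use merr[OF a] mlen[OF a] in auto)
      also have "\<dots> = ennreal (real L + 1) * I a + ennreal E0 * J a"
        unfolding I_def J_def by (simp add: nn_integral_cmult merr[OF a] mlen[OF a])
      finally show "(\<integral>\<^sup>+ r. ennreal (real L + 1) * ennreal (err a r) + ennreal E0 * ennreal (len a r) \<partial>random_string) = ennreal (real L + 1) * I a + ennreal E0 * J a" .
    qed
    finally show ?thesis .
  qed
  have ex: "\<exists>a\<in>A. ennreal (E0/12) \<le> I a"
  proof (rule ccontr)
    assume "\<not> ?thesis"
    then have lt: "I a \<le> ennreal (E0/12)" if "a \<in> A" for a using that by (meson linorder_not_le less_imp_le)
    have "(\<Sum>a\<in>A. ennreal (real L + 1) * I a + ennreal E0 * J a) \<le> (\<Sum>a\<in>A. ennreal (real L + 1) * ennreal (E0/12) + ennreal E0 * ennreal b)"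
      using lt Jb by (intro sum_mono add_mono mult_left_mono) (auto simp: J_def)
    also have "\<dots> = ennreal (real (card A) * ((real L + 1) * (E0/12) + E0 * b))"
    proof -
      have m1: "ennreal ((real L + 1) * (E0/12)) = ennreal (real L + 1) * ennreal (E0/12)"
        by (rule ennreal_mult) (use E0pos in auto)
      have m2: "ennreal (E0 * b) = ennreal E0 * ennreal b" by (rule ennreal_mult) (use E0pos b in auto)
      have "ennreal ((real L + 1) * (E0/12) + E0 * b) = ennreal ((real L + 1) * (E0/12)) + ennreal (E0 * b)"
        by (rule ennreal_plus) (use E0pos b in auto)
      then have c: "ennreal (real L + 1) * ennreal (E0/12) + ennreal E0 * ennreal b = ennreal ((real L + 1) * (E0/12) + E0 * b)"
        unfolding m1 m2 by simp
      have "(\<Sum>a\<in>A. ennreal (real L + 1) * ennreal (E0/12) + ennreal E0 * ennreal b) = of_nat (card A) * ennreal ((real L + 1) * (E0/12) + E0 * b)"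
        unfolding c by simp
      also have "\<dots> = ennreal (real (card A) * ((real L + 1) * (E0/12) + E0 * b))"
        using E0pos b by (simp add: ennreal_of_nat_eq_real_of_nat ennreal_mult)
      finally show ?thesis .
    qed
    finally have "ennreal (real (card A) * E0 * (real L + 1)) \<le> ennreal (real (card A) * ((real L + 1) * (E0/12) + E0 * b)) + ennreal (real N * E0 * (real L + 1))"
      using main_ineq by (meson add_right_mono order_trans)
    also have "\<dots> = ennreal (real (card A) * ((real L + 1) * (E0/12) + E0 * b) + real N * E0 * (real L + 1))"
      using E0pos b by (intro ennreal_plus[symmetric]) auto
    finally have le: "real (card A) * E0 * (real L + 1) \<le> real (card A) * ((real L + 1) * (E0/12) + E0 * b) + real N * E0 * (real L + 1)"
      using E0pos b by (subst (asm) ennreal_le_iff) auto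
    define cA where "cA = real (card A) * E0"
    have cA0: "0 < cA" unfolding cA_def using A0 E0pos by simp
    have f1: "real N * E0 * (real L + 1) \<le> cA * (real L + 1) / 12"
    proof -
      have "12 * real N \<le> real (card A)" using N12 by (metis of_nat_le_iff of_nat_mult of_nat_numeral)
      then have "12 * real N * (E0 * (real L + 1)) \<le> real (card A) * (E0 * (real L + 1))"
        using E0pos by (intro mult_right_mono) auto
      then show ?thesis unfolding cA_def by (simp add: algebra_simps)
    qed
    have f2: "cA * b < cA * (5/6 * (real L + 1))" using P(2) cA0 by (intro mult_strict_left_mono) auto
    have f3: "real (card A) * ((real L + 1) * (E0/12) + E0 * b) = cA * (real L + 1) / 12 + cA * b"
      unfolding cA_def by (simp add: algebra_simps)
    have f4: "real (card A) * E0 * (real L + 1) = cA * (real L + 1) / 12 + cA * (5/6 * (real L + 1)) + cA * (real L + 1) / 12"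
      unfolding cA_def by (simp add: field_simps)
    show False using le f1 f2 f3 f4 by linarith
  qed
  then obtain a where a: "a \<in> A" and Ia: "ennreal (E0/12) \<le> I a" by blast
  have fin: "y^2 * 2 powr (- 3 * b / real d) / (4800 * 2^18) \<le> E0/12"
  proof -
    have p: "0 < 2 powr (3*b/real d)" by simp
    have "(real m)^2 \<le> 2^18 * 2 powr (3*b/real d)" unfolding m_def using P(3) .
    then have "y^2 / (4800 * (2^18 * 2 powr (3*b/real d))) \<le> y^2 / (4800 * (real m)^2)"
      using m0 y by (intro divide_left_mono mult_left_mono) auto
    moreover have "y^2 * 2 powr (- 3 * b / real d) / (4800 * 2^18) = y^2 / (4800 * (2^18 * 2 powr (3*b/real d)))"
      using p by (simp add: powr_minus field_simps)
    moreover have "E0/12 = y^2 / (4800 * (real m)^2)" unfolding E0_def by simp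
    ultimately show ?thesis by simp
  qed
  show ?thesis
  proof (intro exI conjI)
    show "valid_input n d k y (X a)" by (rule valid[OF a])
    have "ennreal (y^2 * 2 powr (- 3 * b / real d) / (4800 * 2^18)) \<le> ennreal (E0/12)"
      using fin by (rule ennreal_leI)
    also have "\<dots> \<le> I a" by (rule Ia)
    finally show "ennreal (y^2 * 2 powr (- 3 * b / real d) / (4800 * 2^18)) \<le> (\<integral>\<^sup>+ r. ennreal ((vnorm k d (EST out rcv (X a) r - mean n (X a)))^2) \<partial>random_string)"
      unfolding I_def err_def .
  qed
qed


theorem theorem6:
  shows "\<exists>c>0. \<forall>(n::nat) (d::nat) (k::norm_kind) (y::real) (b::real) rcv out.
     2 \<le> n \<longrightarrow> 1 \<le> d \<longrightarrow> 0 < y \<longrightarrow> 0 \<le> b \<longrightarrow>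
     mean_estimation_alg n d k y rcv out \<longrightarrow> receives_at_most n d k y rcv b \<longrightarrow>
     (\<exists>x. valid_input n d k y x \<and>
        (\<integral>\<^sup>+ r. ennreal ((vnorm k d (EST out rcv x r - mean n x))^2) \<partial>random_string)
          \<ge> ennreal (c * y^2 * 2 powr (- 3 * b / real d)))"
proof (rule exI[of _ "1 / (4800 * 2^18)"], intro conjI allI impI)
  show "(0::real) < 1 / (4800 * 2^18)" by simp
next
  fix n d :: nat and k y b rcv out
  assume "2 \<le> n" "1 \<le> d" "0 < y" "0 \<le> b" "mean_estimation_alg n d k y rcv out" "receives_at_most n d k y rcv b"
  from main[OF this] show "\<exists>x. valid_input n d k y x \<and>
        (\<integral>\<^sup>+ r. ennreal ((vnorm k d (EST out rcv x r - mean n x))^2) \<partial>random_string)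
          \<ge> ennreal (1 / (4800 * 2^18) * y^2 * 2 powr (- 3 * b / real d))"
    by (simp add: mult.commute)
qed

end
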